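(* Let $\mathcal H$ be a separable complex Hilbert space, $A\in L(\mathcal H)^+$ and $\mathcal S$ a closed subspace such that $(A,\mathcal S)$ is compatible, and let $\mathcal N=\mathcal S\cap N(A)$. Then $$\Pi(A,\mathcal S)=P_{A,\mathcal S}+L(\mathcal H,\mathcal N)=\{P_{A,\mathcal S}+W:\ W\in L(\mathcal H),\ R(W)\subseteq\mathcal N\}.$$
   Context: $(A,\mathcal S)$ is compatible if there exists $Q\in L(\mathcal H)$ with $Q^2=Q$, $R(Q)=\mathcal S$, $AQ=Q^*A$. In that case $P_{A,\mathcal S}$ denotes the unique (bounded) oblique projection with range $\mathcal S$ and nullspace $A(\mathcal S)^\perp\cap\mathcal N^\perp$; it satisfies $AP_{A,\mathcal S}=P_{A,\mathcal S}^*A$. $\Pi(A,\mathcal S)$ is the set of $A$-projections into $\mathcal S$: operators $T\in L(\mathcal H)$ with $R(T)\subseteq\mathcal S$ and $\|y-Ty\|_A\le\|y-s\|_A$ for all $y\in\mathcal H$, $s\in\mathcal S$, where $\|z\|_A=\langle Az,z\rangle^{1/2}$. *)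

theory Defs
  imports "HOL-Analysis.Analysis"
begin

text \<open>A complex Hilbert space is modelled as a real Hilbert space (type of class
real_inner + complete_space) together with a complex structure J (multiplication
by the imaginary unit): J is real-linear, bounded, J(Jx) = -x and J is orthogonal.\<close>

definition complex_structure :: "('a::real_inner \<Rightarrow> 'a) \<Rightarrow> bool" where
  "complex_structure J \<longleftrightarrow> bounded_linear J \<and> (\<forall>x. J (J x) = - x) \<and> (\<forall>x y. J x \<bullet> J y = x \<bullet> y)"

definition scaleJ :: "('a::real_inner \<Rightarrow> 'a) \<Rightarrow> complex \<Rightarrow> 'a \<Rightarrow> 'a" where
  "scaleJ J c x = Re c *\<^sub>R x + Im c *\<^sub>R J x"

text \<open>Complex inner product, linear in the first argument, conjugate linear in the second.\<close>
definition cinner :: "('a::real_inner \<Rightarrow> 'a) \<Rightarrow> 'a \<Rightarrow> 'a \<Rightarrow> complex" where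
  "cinner J x y = Complex (x \<bullet> y) (- (J x \<bullet> y))"

definition bops :: "('a::real_inner \<Rightarrow> 'a) \<Rightarrow> ('a \<Rightarrow> 'a) set" where
  "bops J = {T. bounded_linear T \<and> (\<forall>x. T (J x) = J (T x))}"

definition pos_ops :: "('a::real_inner \<Rightarrow> 'a) \<Rightarrow> ('a \<Rightarrow> 'a) set" where
  "pos_ops J = {A \<in> bops J. \<forall>x. Im (cinner J (A x) x) = 0 \<and> Re (cinner J (A x) x) \<ge> 0}"

definition closed_csubspace :: "('a::real_inner \<Rightarrow> 'a) \<Rightarrow> 'a set \<Rightarrow> bool" where
  "closed_csubspace J S \<longleftrightarrow> subspace S \<and> (\<forall>x\<in>S. J x \<in> S) \<and> closed S"

definition corth :: "('a::real_inner \<Rightarrow> 'a) \<Rightarrow> 'a set \<Rightarrow> 'a set" where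
  "corth J M = {x. \<forall>y\<in>M. cinner J x y = 0}"

text \<open>Q^* A = A Q, expressed via the defining property of the adjoint:
  <Q^* A x, y> = <A x, Q y>.\<close>
definition A_selfadjoint :: "('a::real_inner \<Rightarrow> 'a) \<Rightarrow> ('a \<Rightarrow> 'a) \<Rightarrow> ('a \<Rightarrow> 'a) \<Rightarrow> bool" where
  "A_selfadjoint J A Q \<longleftrightarrow> (\<forall>x y. cinner J (A (Q x)) y = cinner J (A x) (Q y))"

definition compatible :: "('a::real_inner \<Rightarrow> 'a) \<Rightarrow> ('a \<Rightarrow> 'a) \<Rightarrow> 'a set \<Rightarrow> bool" where
  "compatible J A S \<longleftrightarrow> (\<exists>Q \<in> bops J. Q \<circ> Q = Q \<and> range Q = S \<and> A_selfadjoint J A Q)"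

definition P_AS :: "('a::real_inner \<Rightarrow> 'a) \<Rightarrow> ('a \<Rightarrow> 'a) \<Rightarrow> 'a set \<Rightarrow> ('a \<Rightarrow> 'a)" where
  "P_AS J A S = (THE Q. Q \<in> bops J \<and> Q \<circ> Q = Q \<and> range Q = S \<and>
      {x. Q x = 0} = corth J (A ` S) \<inter> corth J (S \<inter> {x. A x = 0}))"

definition normA :: "('a::real_inner \<Rightarrow> 'a) \<Rightarrow> ('a \<Rightarrow> 'a) \<Rightarrow> 'a \<Rightarrow> real" where
  "normA J A z = sqrt (Re (cinner J (A z) z))"

definition A_projections :: "('a::real_inner \<Rightarrow> 'a) \<Rightarrow> ('a \<Rightarrow> 'a) \<Rightarrow> 'a set \<Rightarrow> ('a \<Rightarrow> 'a) set" where
  "A_projections J A S = {T \<in> bops J. range T \<subseteq> S \<and>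
      (\<forall>y s. s \<in> S \<longrightarrow> normA J A (y - T y) \<le> normA J A (y - s))}"

end

theory Submission
  imports Defs
begin


lemma quad_zero:
  fixes b c :: real
  assumes "\<And>t. 0 \<le> 2*t*b + t^2*c"
  shows "b = 0"
proof (rule ccontr)
  assume b: "b \<noteq> 0"
  show False
  proof (cases "c \<le> 0")
    case True
    have "0 \<le> 2*(-b)*b + (-b)^2*c" by (rule assms)
    moreover have "(-b)^2*c \<le> 0" using True by (simp add: mult_nonneg_nonpos)
    moreover have "b*b > 0" using b by (auto simp: zero_less_mult_iff linorder_neq_iff)
    ultimately show False by (simp add: power2_eq_square) 
  next
    case False
    have "0 \<le> 2*(-b/c)*b + (-b/c)^2*c" by (rule assms)
    also have "\<dots> = - (b*b)/c" using False by (simp add: power2_eq_square field_simps)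
    also have "\<dots> < 0" using False b by (auto simp: zero_less_mult_iff linorder_neq_iff)
    finally show False by simp
  qed
qed

lemma infdist_approx:
  assumes "A \<noteq> {}" "e > 0"
  shows "\<exists>a\<in>A. dist x a < infdist x A + e"
proof (rule ccontr)
  assume "\<not> ?thesis"
  then have "\<forall>a\<in>A. infdist x A + e \<le> dist x a" by (auto simp: not_less)
  then have "infdist x A + e \<le> infdist x A"
    unfolding infdist_notempty[OF assms(1)] using assms(1)
    by (intro cINF_greatest) auto
  then show False using assms(2) by simp
qed

lemma proj_exists:
  fixes M :: "'a::{real_inner,complete_space} set"
  assumes sub: "subspace M" and cl: "closed M"
  shows "\<exists>m\<in>M. \<forall>n\<in>M. inner (x - m) n = 0"
proof -
  define d where "d = infdist x M"
  have M0: "0 \<in> M" using sub by (simp add: subspace_0)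
  hence Mne: "M \<noteq> {}" by auto
  have d0: "0 \<le> d" unfolding d_def by (rule infdist_nonneg)
  define e :: "nat \<Rightarrow> real" where "e n = inverse (real (Suc n))" for n
  have epos: "e n > 0" for n unfolding e_def by simp
  have "\<forall>n. \<exists>a\<in>M. dist x a < d + e n" unfolding d_def using infdist_approx[OF Mne epos] by blast
  then obtain m where mM: "\<And>n. m n \<in> M" and md: "\<And>n. dist x (m n) < d + e n"
    by metis
  have dle: "d \<le> dist x a" if "a \<in> M" for a unfolding d_def using that by (rule infdist_le)
  have emono: "e q \<le> e p" if "p \<le> q" for p q unfolding e_def using that
    by (simp add: le_imp_inverse_le)
  have par: "(norm (m p - m q))^2 \<le> 4*d*(e p + e q) + 2*(e p)^2 + 2*(e q)^2" for p q
  proof -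
    let ?a = "x - m p" and ?b = "x - m q"
    have para: "(norm (?a - ?b))^2 + (norm (?a + ?b))^2 = 2*(norm ?a)^2 + 2*(norm ?b)^2"
      by (simp add: power2_norm_eq_inner inner_add inner_diff inner_commute algebra_simps)
    have mid: "(1/2) *\<^sub>R (m p + m q) \<in> M"
      using sub mM by (intro subspace_mul subspace_add) auto
    have "d \<le> dist x ((1/2) *\<^sub>R (m p + m q))" by (rule dle[OF mid])
    also have "dist x ((1/2) *\<^sub>R (m p + m q)) = norm (?a + ?b) / 2"
    proof -
      have "?a + ?b = 2 *\<^sub>R (x - (1/2) *\<^sub>R (m p + m q))" by (simp add: algebra_simps scaleR_2)
      then show ?thesis by (simp add: dist_norm)
    qed
    finally have h1: "2*d \<le> norm (?a + ?b)" by simp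
    have "(2*d)^2 \<le> (norm (?a + ?b))^2" using h1 d0 by (intro power_mono) auto
    moreover have "norm ?a \<le> d + e p" using md[of p] by (simp add: dist_norm)
    hence "(norm ?a)^2 \<le> (d + e p)^2" by (intro power_mono) auto
    moreover have "norm ?b \<le> d + e q" using md[of q] by (simp add: dist_norm)
    hence "(norm ?b)^2 \<le> (d + e q)^2" by (intro power_mono) auto
    moreover have "?a - ?b = m q - m p" by simp
    hence "norm (?a - ?b) = norm (m p - m q)" by (simp add: norm_minus_commute)
    ultimately show ?thesis using para by (simp add: power2_eq_square algebra_simps)
  qed
  have "Cauchy m"
  proof (rule metric_CauchyI)
    fix eps :: real assume eps: "eps > 0"
    define K where "K = 8*d + 5"
    have K: "K > 0" using d0 unfolding K_def by simp
    obtain N where N: "inverse (real (Suc N)) < min 1 (eps^2 / K)"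
      using reals_Archimedean[of "min 1 (eps^2 / K)"] eps K by auto
    show "\<exists>N. \<forall>p\<ge>N. \<forall>q\<ge>N. dist (m p) (m q) < eps"
    proof (intro exI allI impI)
      fix p q assume pN: "N \<le> p" and qN: "N \<le> q"
      have eN: "e N < 1" "e N < eps^2 / K" using N unfolding e_def by auto
      have ep: "e p \<le> e N" "e q \<le> e N" using emono pN qN by auto
      have "(norm (m p - m q))^2 \<le> 4*d*(e p + e q) + 2*(e p)^2 + 2*(e q)^2" by (rule par)
      also have "\<dots> \<le> 4*d*(2*e N) + 2*(e N)^2 + 2*(e N)^2"
        using ep epos[of p] epos[of q] d0
        by (intro add_mono mult_left_mono power_mono) auto
      also have "\<dots> \<le> K * e N"
      proof -
        have "(e N)^2 \<le> e N" using eN epos[of N] by (simp add: power2_eq_square mult_le_cancel_right1 less_imp_le)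
        then show ?thesis unfolding K_def using epos[of N] by (simp add: algebra_simps)
      qed
      also have "\<dots> < eps^2" using eN(2) K by (simp add: field_simps)
      finally have "(norm (m p - m q))^2 < eps^2" .
      then have "norm (m p - m q) < eps" using eps by (simp add: power_less_imp_less_base)
      then show "dist (m p) (m q) < eps" by (simp add: dist_norm)
    qed
  qed
  then obtain m0 where lim: "m \<longlonglongrightarrow> m0" using Cauchy_convergent_iff convergent_def by blast
  have m0M: "m0 \<in> M" using closed_sequentially[OF cl] mM lim by blast
  have "dist x m0 \<le> d"
  proof (rule tendsto_le[OF trivial_limit_sequentially])
    show "(\<lambda>n. d + e n) \<longlonglongrightarrow> d" using tendsto_add[OF tendsto_const LIMSEQ_inverse_real_of_nat]
      unfolding e_def by simp
    show "(\<lambda>n. dist x (m n)) \<longlonglongrightarrow> dist x m0" by (intro tendsto_intros lim)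
    show "\<forall>\<^sub>F n in sequentially. dist x (m n) \<le> d + e n" using md by (simp add: less_imp_le)
  qed
  then have minim: "norm (x - m0) \<le> norm (x - a)" if "a \<in> M" for a
    using dle[OF that] by (simp add: dist_norm)
  have "inner (x - m0) n = 0" if nM: "n \<in> M" for n
  proof -
    have "inner (x - m0) n = 0" if "\<And>t. 0 \<le> 2*t*(- inner (x - m0) n) + t^2*inner n n"
      using quad_zero[OF that] by simp
    moreover have "0 \<le> 2*t*(- inner (x - m0) n) + t^2*inner n n" for t
    proof -
      have "m0 + t *\<^sub>R n \<in> M" using sub m0M nM by (intro subspace_add subspace_mul) auto
      then have "(norm (x - m0))^2 \<le> (norm (x - (m0 + t *\<^sub>R n)))^2"
        using minim by (intro power_mono) auto
      also have "(norm (x - (m0 + t *\<^sub>R n)))^2 = (norm (x - m0))^2 + 2*t*(- inner (x - m0) n) + t^2*inner n n"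
        unfolding power2_norm_eq_inner by (simp add: inner_add inner_diff inner_commute algebra_simps power2_eq_square)
      finally show ?thesis by simp
    qed
    ultimately show ?thesis by blast
  qed
  with m0M show ?thesis by blast
qed



lemma cs_bl: "complex_structure J \<Longrightarrow> bounded_linear J"
  by (simp add: complex_structure_def)
lemma cs_JJ: "complex_structure J \<Longrightarrow> J (J x) = - x"
  by (simp add: complex_structure_def)
lemma cs_orth: "complex_structure J \<Longrightarrow> inner (J x) (J y) = inner x y"
  by (simp add: complex_structure_def)
lemma cs_skew: "complex_structure J \<Longrightarrow> inner (J x) y = - inner x (J y)"
proof -
  assume cs: "complex_structure J"
  have "inner (J x) y = inner (J (J x)) (J y)" using cs_orth[OF cs] by simp
  also have "\<dots> = - inner x (J y)" using cs_JJ[OF cs] by simp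
  finally show ?thesis .
qed

lemma cinner_Re: "Re (cinner J x y) = inner x y" by (simp add: cinner_def)
lemma cinner_Im: "Im (cinner J x y) = - inner (J x) y" by (simp add: cinner_def)
lemma cinner_zero: "cinner J x y = 0 \<longleftrightarrow> inner x y = 0 \<and> inner (J x) y = 0"
  by (simp add: cinner_def complex_eq_iff)

lemma corth_inv:
  assumes cs: "complex_structure J" and inv: "\<And>y. y \<in> M \<Longrightarrow> J y \<in> M"
  shows "corth J M = {x. \<forall>y\<in>M. inner x y = 0}"
proof -
  have "inner (J x) y = 0" if "\<forall>y\<in>M. inner x y = 0" "y \<in> M" for x y
    using that inv[of y] cs_skew[OF cs, of x y] by simp
  then show ?thesis unfolding corth_def cinner_zero by blast
qed

definition oproj :: "'a::real_inner set \<Rightarrow> 'a \<Rightarrow> 'a" where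
  "oproj M x = (SOME m. m \<in> M \<and> (\<forall>n\<in>M. inner (x - m) n = 0))"

lemma oproj_props:
  fixes M :: "'a::{real_inner,complete_space} set"
  assumes "subspace M" "closed M"
  shows "oproj M x \<in> M" "\<And>n. n \<in> M \<Longrightarrow> inner (x - oproj M x) n = 0"
proof -
  have "\<exists>m. m \<in> M \<and> (\<forall>n\<in>M. inner (x - m) n = 0)" using proj_exists[OF assms, of x] by blast
  from someI_ex[OF this] show "oproj M x \<in> M" "\<And>n. n \<in> M \<Longrightarrow> inner (x - oproj M x) n = 0"
    unfolding oproj_def by auto
qed

lemma oproj_unique:
  fixes M :: "'a::{real_inner,complete_space} set"
  assumes sub: "subspace M" and cl: "closed M" and m: "m \<in> M" "\<And>n. n \<in> M \<Longrightarrow> inner (x - m) n = 0"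
  shows "oproj M x = m"
proof -
  let ?p = "oproj M x"
  have d: "m - ?p \<in> M" using sub m oproj_props[OF sub cl] by (simp add: subspace_diff)
  have "inner (m - ?p) (m - ?p) = inner ((x - ?p) - (x - m)) (m - ?p)" by simp
  also have "\<dots> = 0" using m(2)[OF d] oproj_props(2)[OF sub cl d] by (simp add: inner_diff_left)
  finally show ?thesis by simp
qed

lemma oproj_bl:
  fixes M :: "'a::{real_inner,complete_space} set"
  assumes sub: "subspace M" and cl: "closed M"
  shows "bounded_linear (oproj M)"
proof (rule bounded_linear_intro[where K=1])
  note P = oproj_props[OF sub cl]
  fix x y :: 'a and r :: real
  show "oproj M (x + y) = oproj M x + oproj M y"
  proof (rule oproj_unique[OF sub cl])
    show "oproj M x + oproj M y \<in> M" using sub P by (simp add: subspace_add)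
    fix n assume n: "n \<in> M"
    have "inner (x + y - (oproj M x + oproj M y)) n = inner (x - oproj M x) n + inner (y - oproj M y) n"
      by (simp add: inner_diff_left inner_add_left)
    then show "inner (x + y - (oproj M x + oproj M y)) n = 0" using P(2)[OF n, of x] P(2)[OF n, of y] by simp
  qed
  show "oproj M (r *\<^sub>R x) = r *\<^sub>R oproj M x"
  proof (rule oproj_unique[OF sub cl])
    show "r *\<^sub>R oproj M x \<in> M" using sub P by (simp add: subspace_mul)
    fix n assume n: "n \<in> M"
    have "inner (r *\<^sub>R x - r *\<^sub>R oproj M x) n = r * inner (x - oproj M x) n"
      by (simp add: inner_diff_left right_diff_distrib)
    then show "inner (r *\<^sub>R x - r *\<^sub>R oproj M x) n = 0" using P(2)[OF n, of x] by simp
  qed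
  have "inner (oproj M x) (x - oproj M x) = inner (x - oproj M x) (oproj M x)" by (rule inner_commute)
  also have "\<dots> = 0" by (rule P(2)[OF P(1)])
  finally have o: "inner (oproj M x) (x - oproj M x) = 0" .
  have pyth: "(norm (oproj M x + (x - oproj M x)))^2 = (norm (oproj M x))^2 + (norm (x - oproj M x))^2"
    by (rule norm_add_Pythagorean) (simp only: orthogonal_def o)
  have e: "oproj M x + (x - oproj M x) = x" by simp
  have "(norm (oproj M x))^2 \<le> (norm x)^2"
    using pyth[unfolded e] zero_le_power2[of "norm (x - oproj M x)"] by linarith
  from power2_le_imp_le[OF this norm_ge_zero] show "norm (oproj M x) \<le> norm x * 1" by simp
qed

lemma oproj_J:
  fixes M :: "'a::{real_inner,complete_space} set"
  assumes sub: "subspace M" and cl: "closed M" and cs: "complex_structure J"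
    and inv: "\<And>y. y \<in> M \<Longrightarrow> J y \<in> M"
  shows "oproj M (J x) = J (oproj M x)"
proof (rule oproj_unique[OF sub cl])
  note P = oproj_props[OF sub cl]
  interpret J: bounded_linear J by (rule cs_bl[OF cs])
  show "J (oproj M x) \<in> M" using inv P(1) by simp
  fix n assume n: "n \<in> M"
  have "inner (J x - J (oproj M x)) n = inner (J (x - oproj M x)) n" by (simp add: J.diff)
  also have "\<dots> = - inner (x - oproj M x) (J n)" by (rule cs_skew[OF cs])
  also have "\<dots> = 0" using P(2)[OF inv[OF n]] by simp
  finally show "inner (J x - J (oproj M x)) n = 0" .
qed


lemma pos_facts:
  assumes cs: "complex_structure J" and A: "A \<in> pos_ops J"
  shows "bounded_linear A" "\<And>x. A (J x) = J (A x)" "\<And>x. 0 \<le> inner (A x) x"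
    "\<And>x y. inner (A x) y = inner x (A y)"
proof -
  show bl: "bounded_linear A" using A by (simp add: pos_ops_def bops_def)
  show AJ: "\<And>x. A (J x) = J (A x)" using A by (simp add: pos_ops_def bops_def)
  show "\<And>x. 0 \<le> inner (A x) x" using A by (simp add: pos_ops_def cinner_Re)
  have g0: "inner (J (A x)) x = 0" for x using A by (simp add: pos_ops_def cinner_Im)
  interpret A: bounded_linear A by (rule bl)
  interpret J: bounded_linear J by (rule cs_bl[OF cs])
  have skew: "inner (J (A x)) y = - inner (J (A y)) x" for x y
  proof -
    have "0 = inner (J (A (x + y))) (x + y)" using g0 by simp
    also have "\<dots> = inner (J (A x)) x + inner (J (A x)) y + inner (J (A y)) x + inner (J (A y)) y"
      by (simp add: A.add J.add inner_add)
    finally show ?thesis using g0[of x] g0[of y] by simp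
  qed
  fix x z
  have "inner (A x) z = inner (J (A x)) (J z)" using cs_orth[OF cs] by simp
  also have "\<dots> = - inner (J (A (J z))) x" by (rule skew)
  also have "\<dots> = inner (A z) x" using AJ cs_JJ[OF cs] by simp
  finally show "inner (A x) z = inner x (A z)" by (simp add: inner_commute)
qed

lemma quadA:
  assumes bl: "bounded_linear A" and sym: "\<And>x y. inner (A x) y = inner x (A y)"
  shows "inner (A (z + t *\<^sub>R u)) (z + t *\<^sub>R u) = inner (A z) z + 2*t*inner (A z) u + t^2 * inner (A u) u"
proof -
  interpret A: bounded_linear A by (rule bl)
  have "inner (A u) z = inner u (A z)" by (rule sym)
  also have "\<dots> = inner (A z) u" by (rule inner_commute)
  finally have "inner (A u) z = inner (A z) u" .
  then show ?thesis by (simp add: A.add A.scaleR inner_add power2_eq_square algebra_simps)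
qed

lemma psd_zero:
  assumes bl: "bounded_linear A" and sym: "\<And>x y. inner (A x) y = inner x (A y)"
    and psd: "\<And>x. 0 \<le> inner (A x) x" and x: "inner (A x) x = 0"
  shows "A x = 0"
proof -
  have "inner (A x) (A x) = 0"
  proof (rule quad_zero)
    fix t
    show "0 \<le> 2*t*inner (A x) (A x) + t^2 * inner (A (A x)) (A x)"
      using psd[of "x + t *\<^sub>R A x"] quadA[OF bl sym, of x t "A x"] x by simp
  qed
  then show ?thesis by simp
qed

lemma min_char:
  assumes bl: "bounded_linear A" and sym: "\<And>x y. inner (A x) y = inner x (A y)"
    and psd: "\<And>x. 0 \<le> inner (A x) x" and sub: "subspace S" and t: "t \<in> S"
  shows "(\<forall>s\<in>S. normA J A (y - t) \<le> normA J A (y - s)) \<longleftrightarrow> (\<forall>u\<in>S. inner (A (y - t)) u = 0)"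
proof
  assume H: "\<forall>s\<in>S. normA J A (y - t) \<le> normA J A (y - s)"
  show "\<forall>u\<in>S. inner (A (y - t)) u = 0"
  proof (intro ballI quad_zero)
    fix u r assume u: "u \<in> S"
    have "t - r *\<^sub>R u \<in> S" using sub t u by (simp add: subspace_diff subspace_mul)
    then have "normA J A (y - t) \<le> normA J A (y - (t - r *\<^sub>R u))" using H by blast
    then have "inner (A (y - t)) (y - t) \<le> inner (A ((y - t) + r *\<^sub>R u)) ((y - t) + r *\<^sub>R u)"
      unfolding normA_def cinner_Re by (simp add: algebra_simps)
    then show "0 \<le> 2*r*inner (A (y - t)) u + r^2 * inner (A u) u"
      unfolding quadA[OF bl sym] by simp
  qed
next
  assume H: "\<forall>u\<in>S. inner (A (y - t)) u = 0"
  show "\<forall>s\<in>S. normA J A (y - t) \<le> normA J A (y - s)"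
  proof
    fix s assume s: "s \<in> S"
    have u: "t - s \<in> S" using sub t s by (simp add: subspace_diff)
    have "inner (A ((y - t) + 1 *\<^sub>R (t - s))) ((y - t) + 1 *\<^sub>R (t - s)) = inner (A (y - t)) (y - t) + inner (A (t - s)) (t - s)"
      unfolding quadA[OF bl sym] using H u by simp
    then have "inner (A (y - t)) (y - t) \<le> inner (A (y - s)) (y - s)" using psd[of "t - s"] by simp
    then show "normA J A (y - t) \<le> normA J A (y - s)"
      unfolding normA_def cinner_Re by simp
  qed
qed


lemma idem_unique:
  assumes l1: "linear Q1" and l2: "linear Q2" and i1: "Q1 \<circ> Q1 = Q1" and i2: "Q2 \<circ> Q2 = Q2"
    and r: "range Q1 = range Q2" and k: "{x. Q1 x = 0} = {x. Q2 x = 0}"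
  shows "Q1 = Q2"
proof
  fix x
  have i1': "Q1 (Q1 y) = Q1 y" for y using i1 by (metis comp_apply)
  have i2': "Q2 (Q2 y) = Q2 y" for y using i2 by (metis comp_apply)
  have "Q1 (x - Q1 x) = 0" using i1' by (simp add: linear_diff[OF l1])
  then have "Q2 (x - Q1 x) = 0" using k by blast
  then have e: "Q2 x = Q2 (Q1 x)" by (simp add: linear_diff[OF l2])
  obtain z where "Q1 x = Q2 z" using r by (metis rangeI image_iff)
  then show "Q1 x = Q2 x" using e i2' by simp
qed

lemma P_AS_props:
  fixes J :: "'a::{real_inner, complete_space} \<Rightarrow> 'a"
  assumes cs: "complex_structure J" and Apos: "A \<in> pos_ops J"
    and Scs: "closed_csubspace J S" and comp: "compatible J A S"
  shows "P_AS J A S \<in> bops J \<and> P_AS J A S \<circ> P_AS J A S = P_AS J A S \<and> range (P_AS J A S) = S \<and>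
      {x. P_AS J A S x = 0} = corth J (A ` S) \<inter> corth J (S \<inter> {x. A x = 0})"
proof -
  note AF = pos_facts[OF cs Apos]
  interpret A: bounded_linear A by (rule AF(1))
  interpret J: bounded_linear J by (rule cs_bl[OF cs])
  have subS: "subspace S" and JS: "\<And>x. x \<in> S \<Longrightarrow> J x \<in> S" and clS: "closed S"
    using Scs by (auto simp: closed_csubspace_def)
  define N where "N = S \<inter> {x. A x = 0}"
  have subK: "subspace {x. A x = 0}" unfolding subspace_def by (simp add: A.add A.scaleR A.zero)
  have subN: "subspace N" using subS subK unfolding N_def subspace_def by blast
  have clN: "closed N" unfolding N_def
    by (intro closed_Int clS closed_Collect_eq linear_continuous_on AF(1) continuous_on_const)
  have JN: "J x \<in> N" if "x \<in> N" for x using that JS AF(2)[of x] unfolding N_def by auto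
  define R where "R = oproj N"
  note RP = oproj_props[OF subN clN]
  have Rbl: "bounded_linear R" unfolding R_def by (rule oproj_bl[OF subN clN])
  interpret R: bounded_linear R by (rule Rbl)
  have RJ: "R (J x) = J (R x)" for x unfolding R_def by (rule oproj_J[OF subN clN cs JN])
  have RN: "R n = n" if "n \<in> N" for n unfolding R_def
    by (rule oproj_unique[OF subN clN that]) simp
  have R0: "R x = 0" if "\<forall>n\<in>N. inner x n = 0" for x unfolding R_def
    by (rule oproj_unique[OF subN clN]) (auto simp: subspace_0[OF subN] that)
  have Rorth: "inner (x - R x) n = 0" if "n \<in> N" for x n using RP(2)[OF that] unfolding R_def .
  obtain Q where Qb: "Q \<in> bops J" and Qi: "Q \<circ> Q = Q" and Qr: "range Q = S" and Qs: "A_selfadjoint J A Q"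
    using comp unfolding compatible_def by blast
  have Qbl: "bounded_linear Q" and QJ: "\<And>x. Q (J x) = J (Q x)" using Qb by (auto simp: bops_def)
  interpret Q: bounded_linear Q by (rule Qbl)
  have Qi': "Q (Q x) = Q x" for x using fun_cong[OF Qi, of x] by simp
  have QS: "Q x \<in> S" for x using Qr by auto
  have Qfix: "Q s = s" if "s \<in> S" for s
  proof -
    have "s \<in> range Q" using that Qr by simp
    then obtain z where "s = Q z" by blast
    then show ?thesis using Qi' by simp
  qed
  have Qadj: "inner (A (Q x)) y = inner (A x) (Q y)" for x y
  proof -
    have "cinner J (A (Q x)) y = cinner J (A x) (Q y)" using Qs unfolding A_selfadjoint_def by blast
    from arg_cong[OF this, of Re] show ?thesis by (simp add: cinner_Re)
  qed
  have kerQ: "inner (A x) u = 0" if "Q x = 0" "u \<in> S" for x u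
  proof -
    have "inner (A x) u = inner (A x) (Q u)" using Qfix[OF that(2)] by simp
    also have "\<dots> = inner (A (Q x)) u" using Qadj by simp
    finally show ?thesis using that(1) by simp
  qed
  define P where "P x = Q x + R (x - Q x)" for x
  have Pbl: "bounded_linear P" unfolding P_def[abs_def]
    by (intro bounded_linear_add Qbl bounded_linear_compose[OF Rbl] bounded_linear_sub bounded_linear_ident)
  have PJ: "P (J x) = J (P x)" for x
  proof -
    have "P (J x) = Q (J x) + R (J x - Q (J x))" by (simp add: P_def)
    also have "\<dots> = J (Q x) + R (J (x - Q x))" by (simp add: QJ J.diff)
    also have "\<dots> = J (P x)" by (simp add: RJ J.add P_def)
    finally show ?thesis .
  qed
  have PS: "P x \<in> S" for x
  proof -
    have "R (x - Q x) \<in> S" using RP(1)[of "x - Q x"] unfolding R_def N_def by auto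
    then show ?thesis unfolding P_def using QS subS by (simp add: subspace_add)
  qed
  have Pfix: "P s = s" if "s \<in> S" for s unfolding P_def using Qfix[OF that] by simp
  have Pi: "P \<circ> P = P" using Pfix PS by (auto simp: fun_eq_iff)
  have Pr: "range P = S"
  proof
    show "range P \<subseteq> S" using PS by auto
    show "S \<subseteq> range P" using Pfix by (metis rangeI subsetI)
  qed
  have cA: "corth J (A ` S) = {x. \<forall>y\<in>A ` S. inner x y = 0}"
    by (rule corth_inv[OF cs]) (auto simp: AF(2)[symmetric] JS)
  have cN: "corth J N = {x. \<forall>y\<in>N. inner x y = 0}" by (rule corth_inv[OF cs JN])
  have Pk: "{x. P x = 0} = corth J (A ` S) \<inter> corth J N"
  proof (intro set_eqI iffI)
    fix x assume "x \<in> {x. P x = 0}"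
    then have P0: "P x = 0" by simp
    then have "Q x = - R (x - Q x)" unfolding P_def by (simp add: eq_neg_iff_add_eq_0)
    moreover have "- R (x - Q x) \<in> N" using RP(1) subN unfolding R_def by (simp add: subspace_neg)
    ultimately have QN: "Q x \<in> N" by simp
    have "P x = R x" unfolding P_def using RN[OF QN] by (simp add: R.diff)
    then have Rx: "R x = 0" using P0 by simp
    have xN: "\<forall>n\<in>N. inner x n = 0" using Rorth[of _ x] Rx by simp
    have "Q (x - Q x) = 0" using Qi' by (simp add: Q.diff)
    then have k: "inner (A (x - Q x)) u = 0" if "u \<in> S" for u using kerQ that by blast
    have "inner x (A u) = 0" if "u \<in> S" for u
    proof -
      have "inner x (A u) = inner (A x) u" using AF(4)[of x u] by simp
      also have "\<dots> = inner (A (Q x)) u + inner (A (x - Q x)) u" by (simp add: A.diff inner_diff_left)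
      also have "\<dots> = 0" using QN k[OF that] unfolding N_def by simp
      finally show ?thesis .
    qed
    then show "x \<in> corth J (A ` S) \<inter> corth J N" unfolding cA cN using xN by auto
  next
    fix x assume "x \<in> corth J (A ` S) \<inter> corth J N"
    then have xA: "\<And>u. u \<in> S \<Longrightarrow> inner x (A u) = 0" and xN: "\<forall>n\<in>N. inner x n = 0"
      unfolding cA cN by auto
    have "Q (x - Q x) = 0" using Qi' by (simp add: Q.diff)
    then have k: "inner (A (x - Q x)) u = 0" if "u \<in> S" for u using kerQ that by blast
    have "inner (A (Q x)) (Q x) = 0"
    proof -
      have "inner (A (Q x)) (Q x) = inner (A x) (Q x) - inner (A (x - Q x)) (Q x)"
        by (simp add: A.diff inner_diff_left)
      also have "\<dots> = 0" using xA[OF QS] k[OF QS] AF(4)[of x "Q x"] by simp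
      finally show ?thesis .
    qed
    then have "A (Q x) = 0" using psd_zero[OF AF(1) AF(4) AF(3)] by blast
    then have QN: "Q x \<in> N" unfolding N_def using QS by simp
    have "P x = Q x + R x - Q x" unfolding P_def using RN[OF QN] by (simp add: R.diff)
    then show "x \<in> {x. P x = 0}" using R0[OF xN] by simp
  qed
  let ?prop = "\<lambda>Q. Q \<in> bops J \<and> Q \<circ> Q = Q \<and> range Q = S \<and>
      {x. Q x = 0} = corth J (A ` S) \<inter> corth J (S \<inter> {x. A x = 0})"
  have Pb: "P \<in> bops J" using Pbl PJ unfolding bops_def by blast
  have Pk': "{x. P x = 0} = corth J (A ` S) \<inter> corth J (S \<inter> {x. A x = 0})" using Pk unfolding N_def .
  have "?prop P" using Pb Pi Pr Pk' by (intro conjI)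
  moreover have "Q' = P" if H: "?prop Q'" for Q'
  proof (rule idem_unique)
    show "linear Q'" using H unfolding bops_def by (blast intro: bounded_linear.linear)
    show "linear P" using Pbl by (rule bounded_linear.linear)
    show "Q' \<circ> Q' = Q'" using H by blast
    show "P \<circ> P = P" by (rule Pi)
    show "range Q' = range P" using H Pr by simp
    show "{x. Q' x = 0} = {x. P x = 0}" using H Pk' by simp
  qed
  ultimately have "?prop (THE Q. ?prop Q)" by (rule theI)
  then show ?thesis unfolding P_AS_def .
qed


theorem mainTheorem8:
  fixes J :: "'a::{real_inner, complete_space} \<Rightarrow> 'a"
    and A :: "'a \<Rightarrow> 'a" and S :: "'a set"
  assumes "complex_structure J"
    and "separable_space (euclidean :: 'a topology)"
    and "A \<in> pos_ops J"
    and "closed_csubspace J S"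
    and "compatible J A S"
  shows "A_projections J A S =
           {(\<lambda>x. P_AS J A S x + W x) | W. W \<in> bops J \<and> range W \<subseteq> S \<inter> {x. A x = 0}}"
proof -
  note cs = assms(1)
  note AF = pos_facts[OF assms(1) assms(3)]
  interpret A: bounded_linear A by (rule AF(1))
  interpret J: bounded_linear J by (rule cs_bl[OF cs])
  have subS: "subspace S" and JS: "\<And>x. x \<in> S \<Longrightarrow> J x \<in> S"
    using assms(4) by (auto simp: closed_csubspace_def)
  define P where "P = P_AS J A S"
  have PP: "P \<in> bops J \<and> P \<circ> P = P \<and> range P = S \<and>
      {x. P x = 0} = corth J (A ` S) \<inter> corth J (S \<inter> {x. A x = 0})"
    using P_AS_props[OF assms(1,3,4,5)] unfolding P_def .
  have Pbl: "bounded_linear P" and PJ: "\<And>x. P (J x) = J (P x)" using PP by (auto simp: bops_def)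
  interpret P: bounded_linear P by (rule Pbl)
  have PS: "P x \<in> S" for x using PP by blast
  have Pi': "P (P x) = P x" for x using PP by (metis comp_apply)
  have Pmin: "inner (A (y - P y)) u = 0" if u: "u \<in> S" for y u
  proof -
    have "P (y - P y) = 0" using Pi' by (simp add: P.diff)
    then have "y - P y \<in> corth J (A ` S)" using PP by blast
    then have "cinner J (y - P y) (A u) = 0" using u unfolding corth_def by blast
    then have "inner (y - P y) (A u) = 0" unfolding cinner_zero by blast
    then show ?thesis using AF(4)[of "y - P y" u] by simp
  qed
  have char: "T \<in> A_projections J A S \<longleftrightarrow>
      T \<in> bops J \<and> range T \<subseteq> S \<and> (\<forall>y. \<forall>u\<in>S. inner (A (y - T y)) u = 0)" for T
  proof -
    have "(\<forall>y s. s \<in> S \<longrightarrow> normA J A (y - T y) \<le> normA J A (y - s)) \<longleftrightarrow> (\<forall>y. \<forall>u\<in>S. inner (A (y - T y)) u = 0)"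
      if "range T \<subseteq> S"
    proof -
      have "(\<forall>s\<in>S. normA J A (y - T y) \<le> normA J A (y - s)) \<longleftrightarrow> (\<forall>u\<in>S. inner (A (y - T y)) u = 0)" for y
        using that by (intro min_char[OF AF(1) AF(4) AF(3) subS]) auto
      then show ?thesis by blast
    qed
    then show ?thesis unfolding A_projections_def by blast
  qed
  show ?thesis
  proof (intro set_eqI iffI)
    fix T assume "T \<in> A_projections J A S"
    then have Tb: "T \<in> bops J" and TS: "range T \<subseteq> S" and Tm: "\<And>y u. u \<in> S \<Longrightarrow> inner (A (y - T y)) u = 0"
      unfolding char by auto
    have Tbl: "bounded_linear T" and TJ: "\<And>x. T (J x) = J (T x)" using Tb by (auto simp: bops_def)
    define W where "W x = T x - P x" for x
    have Wbl: "bounded_linear W" unfolding W_def[abs_def] by (intro bounded_linear_sub Tbl Pbl)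
    have WJ: "W (J x) = J (W x)" for x unfolding W_def by (simp add: TJ PJ J.diff)
    have WS: "W x \<in> S" for x unfolding W_def using TS PS subS by (auto intro: subspace_diff)
    have WA: "A (W x) = 0" for x
    proof -
      have "A (W x) = A (x - P x) - A (x - T x)" unfolding W_def by (simp add: A.diff)
      then have "inner (A (W x)) u = 0" if "u \<in> S" for u
        using Pmin[OF that, of x] Tm[OF that, of x] by (simp add: inner_diff_left)
      from this[OF WS] show ?thesis by (rule psd_zero[OF AF(1) AF(4) AF(3)])
    qed
    have "T = (\<lambda>x. P x + W x)" unfolding W_def by auto
    moreover have "W \<in> bops J" using Wbl WJ unfolding bops_def by blast
    moreover have "range W \<subseteq> S \<inter> {x. A x = 0}" using WS WA by auto
    ultimately show "T \<in> {(\<lambda>x. P_AS J A S x + W x) | W. W \<in> bops J \<and> range W \<subseteq> S \<inter> {x. A x = 0}}"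
      unfolding P_def[symmetric] by blast
  next
    fix T assume "T \<in> {(\<lambda>x. P_AS J A S x + W x) | W. W \<in> bops J \<and> range W \<subseteq> S \<inter> {x. A x = 0}}"
    then obtain W where T: "T = (\<lambda>x. P x + W x)" and Wb: "W \<in> bops J" and WR: "range W \<subseteq> S \<inter> {x. A x = 0}"
      unfolding P_def[symmetric] by blast
    have Wbl: "bounded_linear W" and WJ: "\<And>x. W (J x) = J (W x)" using Wb by (auto simp: bops_def)
    have WS: "W x \<in> S" and WA: "A (W x) = 0" for x using WR by auto
    have "bounded_linear T" unfolding T by (intro bounded_linear_add Pbl Wbl)
    moreover have "T (J x) = J (T x)" for x unfolding T by (simp add: PJ WJ J.add)
    ultimately have "T \<in> bops J" unfolding bops_def by blast
    moreover have "range T \<subseteq> S" unfolding T using PS WS subS by (auto intro: subspace_add)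
    moreover have "inner (A (y - T y)) u = 0" if "u \<in> S" for y u
    proof -
      have "A (y - T y) = A (y - P y) - A (W y)" unfolding T by (simp add: A.diff diff_add_eq_diff_diff_swap)
      then show ?thesis using Pmin[OF that, of y] WA[of y] by (simp add: inner_diff_left)
    qed
    ultimately show "T \<in> A_projections J A S" unfolding char by blast
  qed
qed

end
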